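(* For each $m$, let $\mathbf{p}=(p_1,\dots,p_m)$ be a probability distribution on $m$ urns with $p_1\le p_2\le\dots\le p_m$, and let $\alpha_j=\sum_{i=1}^m p_i^j$. Let $B$ be the number of balls thrown independently into the urns according to $\mathbf{p}$ until some urn contains two balls. Assume there exists $\tau=\tau(\mathbf{p})>0$ such that (A) $p_m\tau<1$; (B) $\sqrt{\alpha_2}\,\tau\to+\infty$ as $m\to\infty$; (C) $\sqrt[3]{\alpha_3}\,\tau\to0$ as $m\to\infty$. Then, as $m\to\infty$, \[ E(B)=\sqrt{\frac{\pi}{2\alpha_2}}\,(1+o(1)). \] *)

theory Defs
  imports "HOL-Probability.Probability" "HOL-Library.Landau_Symbols"
begin

definition urn_pmf :: "(nat \<Rightarrow> real) \<Rightarrow> nat \<Rightarrow> nat pmf" where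
  "urn_pmf p m = embed_pmf (\<lambda>i. if i \<in> {1..m} then p i else 0)"

text \<open>Balls are thrown at times 0,1,2,...; omega k is the urn of ball k.
  B = number of balls thrown until some urn contains two balls
    = least n such that two among the first n balls share an urn.\<close>
definition first_collision :: "(nat \<Rightarrow> nat) \<Rightarrow> nat" where
  "first_collision \<omega> = (LEAST n. \<exists>i j. i < j \<and> j < n \<and> \<omega> i = \<omega> j)"

definition ball_space :: "(nat \<Rightarrow> real) \<Rightarrow> nat \<Rightarrow> (nat \<Rightarrow> nat) measure" where
  "ball_space p m = (\<Pi>\<^sub>M k\<in>(UNIV::nat set). measure_pmf (urn_pmf p m))"

definition expected_B :: "(nat \<Rightarrow> real) \<Rightarrow> nat \<Rightarrow> real" where
  "expected_B p m = (\<integral>\<omega>. real (first_collision \<omega>) \<partial>(ball_space p m))"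

definition alpha :: "(nat \<Rightarrow> real) \<Rightarrow> nat \<Rightarrow> nat \<Rightarrow> real" where
  "alpha p m j = (\<Sum>i=1..m. p i ^ j)"

end

theory Submission
  imports Defs
begin


lemma pmf_urn:
  assumes nn: "\<forall>i\<in>{1..m}. q i \<ge> 0" and s: "(\<Sum>i=1..m. q i) = 1"
  shows "pmf (urn_pmf q m) i = (if i \<in> {1..m} then q i else 0)"
  unfolding urn_pmf_def
proof (rule pmf_embed_pmf)
  show "\<And>x. 0 \<le> (if x \<in> {1..m} then q x else 0)" using nn by auto
  have "(\<integral>\<^sup>+x. ennreal (if x \<in> {1..m} then q x else 0) \<partial>count_space UNIV) = (\<Sum>x\<in>{1..m}. ennreal (if x \<in> {1..m} then q x else 0))"
    by (rule nn_integral_count_space') auto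
  also have "\<dots> = ennreal (\<Sum>x\<in>{1..m}. q x)" using nn by (subst sum_ennreal) auto
  finally show "(\<integral>\<^sup>+x. ennreal (if x \<in> {1..m} then q x else 0) \<partial>count_space UNIV) = 1" using s by simp
qed

lemma space_ball: "space (ball_space q m) = UNIV"
  unfolding ball_space_def by (simp add: space_PiM PiE_def extensional_def)

lemma cyl_measure:
  assumes nn: "\<forall>i\<in>{1..m}. q i \<ge> 0" and s: "(\<Sum>i=1..m. q i) = 1"
  shows "{\<omega>. \<forall>i\<in>{..<k}. \<omega> i = f i} \<in> sets (ball_space q m)"
    "measure (ball_space q m) {\<omega>. \<forall>i\<in>{..<k}. \<omega> i = f i} = (\<Prod>i<k. pmf (urn_pmf q m) (f i))"
proof -
  let ?M = "measure_pmf (urn_pmf q m)"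
  interpret product_prob_space "\<lambda>_. ?M" UNIV by unfold_locales
  have e: "{\<omega>. \<forall>i\<in>{..<k}. \<omega> i = f i} = {x\<in>space (Pi\<^sub>M UNIV (\<lambda>_. ?M)). \<forall>i\<in>{..<k}. x i \<in> {f i}}"
    using space_ball[of q m] unfolding ball_space_def by auto
  show "{\<omega>. \<forall>i\<in>{..<k}. \<omega> i = f i} \<in> sets (ball_space q m)"
    unfolding e ball_space_def
    by (intro sets.sets_Collect_finite_All sets_Collect_single') auto
  have "emeasure (ball_space q m) {\<omega>. \<forall>i\<in>{..<k}. \<omega> i = f i} = (\<Prod>i<k. emeasure ?M {f i})"
    unfolding e ball_space_def by (rule emeasure_PiM_Collect) auto
  also have "\<dots> = ennreal (\<Prod>i<k. pmf (urn_pmf q m) (f i))"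
    by (simp add: emeasure_pmf_single prod_ennreal)
  finally show "measure (ball_space q m) {\<omega>. \<forall>i\<in>{..<k}. \<omega> i = f i} = (\<Prod>i<k. pmf (urn_pmf q m) (f i))"
    by (simp add: measure_def prod_nonneg)
qed

lemma prob_ball: "prob_space (ball_space q m)"
  unfolding ball_space_def by (rule prob_space_PiM) (rule prob_space_measure_pmf)

lemma AE_ball: 
  assumes nn: "\<forall>i\<in>{1..m}. q i \<ge> 0" and s: "(\<Sum>i=1..m. q i) = 1"
  shows "AE \<omega> in ball_space q m. \<forall>i. \<omega> i \<in> {1..m}"
proof -
  have "AE \<omega> in ball_space q m. \<omega> i \<in> {1..m}" for i
    unfolding ball_space_def
  proof (rule AE_PiM_component)
    show "AE x in measure_pmf (urn_pmf q m). x \<in> {1..m}"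
    proof (rule AE_pmfI)
      fix y assume "y \<in> set_pmf (urn_pmf q m)"
      then have "pmf (urn_pmf q m) y \<noteq> 0" by (simp add: set_pmf_iff)
      then show "y \<in> {1..m}" using pmf_urn[OF nn s, of y] by (auto split: if_splits)
    qed
  qed (auto simp: prob_space_measure_pmf)
  then show ?thesis by (simp add: AE_all_countable)
qed



definition Inj :: "nat \<Rightarrow> nat \<Rightarrow> (nat \<Rightarrow> nat) set" where
  "Inj m k = {f \<in> {..<k} \<rightarrow>\<^sub>E {1..m}. inj_on f {..<k}}"

lemma finite_Inj: "finite (Inj m k)"
  unfolding Inj_def by (rule finite_subset[of _ "{..<k} \<rightarrow>\<^sub>E {1..m}"]) (auto intro: finite_PiE)

lemma ind_sum:
  assumes "\<forall>i. \<omega> i \<in> {1..m}"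
  shows "(\<Sum>f\<in>Inj m k. indicator {\<omega>. \<forall>i\<in>{..<k}. \<omega> i = f i} \<omega>) = (if inj_on \<omega> {..<k} then 1 else (0::real))"
proof -
  have "(\<Sum>f\<in>Inj m k. indicator {\<omega>. \<forall>i\<in>{..<k}. \<omega> i = f i} \<omega>) = 
        (\<Sum>f\<in>Inj m k. if restrict \<omega> {..<k} = f then 1 else (0::real))"
  proof (rule sum.cong[OF refl])
    fix f assume f: "f \<in> Inj m k"
    have "(\<forall>i\<in>{..<k}. \<omega> i = f i) \<longleftrightarrow> restrict \<omega> {..<k} = f"
      using f unfolding Inj_def by (auto simp: PiE_def extensional_def fun_eq_iff)
    then show "indicator {\<omega>. \<forall>i\<in>{..<k}. \<omega> i = f i} \<omega> = (if restrict \<omega> {..<k} = f then 1 else (0::real))"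
      by (simp add: indicator_def)
  qed
  also have "\<dots> = (if restrict \<omega> {..<k} \<in> Inj m k then 1 else 0)"
    by (simp add: sum.delta finite_Inj)
  also have "(restrict \<omega> {..<k} \<in> Inj m k) = inj_on \<omega> {..<k}"
    using assms unfolding Inj_def by auto
  finally show ?thesis .
qed

lemma fc_count:
  assumes "\<forall>i. \<omega> i \<in> {1..m}"
  shows "real (first_collision \<omega>) = (\<Sum>k\<le>m. if inj_on \<omega> {..<k} then 1 else (0::real))"
proof -
  let ?P = "\<lambda>n. \<exists>i j. i < j \<and> j < n \<and> \<omega> i = \<omega> j"
  have PI: "?P n \<longleftrightarrow> \<not> inj_on \<omega> {..<n}" for n
  proof
    assume "?P n" then show "\<not> inj_on \<omega> {..<n}" by (auto simp: inj_on_def)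
  next
    assume "\<not> inj_on \<omega> {..<n}"
    then obtain i j where "i < n" "j < n" "i \<noteq> j" "\<omega> i = \<omega> j" by (auto simp: inj_on_def)
    then show "?P n" by (cases "i < j") (metis, metis linorder_neqE_nat)
  qed
  have ex: "?P (Suc m)"
  proof -
    have "\<omega> ` {..<Suc m} \<subseteq> {1..m}" using assms by auto
    then have "card (\<omega> ` {..<Suc m}) \<le> m" by (metis card_atLeastAtMost card_mono diff_Suc_1 finite_atLeastAtMost)
    then have "\<not> inj_on \<omega> {..<Suc m}" using card_image by fastforce
    then show ?thesis using PI by blast
  qed
  define n0 where "n0 = first_collision \<omega>"
  have n0: "n0 = (LEAST n. ?P n)" unfolding n0_def first_collision_def by simp
  have Pn0: "?P n0" unfolding n0 by (rule LeastI[of ?P, OF ex])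
  have n0le: "n0 \<le> Suc m" unfolding n0 by (rule Least_le[of ?P, OF ex])
  have iff: "inj_on \<omega> {..<k} \<longleftrightarrow> k < n0" for k
  proof
    assume "inj_on \<omega> {..<k}"
    then have "\<not> ?P k" using PI by blast
    moreover have "n0 \<le> k \<Longrightarrow> ?P k" using Pn0 by (meson order_less_le_trans)
    ultimately show "k < n0" using not_less by blast
  next
    assume "k < n0" then have "\<not> ?P k" unfolding n0 by (rule not_less_Least)
    then show "inj_on \<omega> {..<k}" using PI by blast
  qed
  have "(\<Sum>k\<le>m. if inj_on \<omega> {..<k} then 1 else (0::real)) = (\<Sum>k\<le>m. if k < n0 then 1 else (0::real))"
    by (simp add: iff)
  also have "\<dots> = (\<Sum>k\<in>{..m} \<inter> {k. k < n0}. 1)"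
    by (simp add: sum.If_cases)
  also have "{..m} \<inter> {k. k < n0} = {..<n0}" using n0le by auto
  finally show ?thesis by (simp add: n0_def)
qed



lemma fc_meas: "first_collision \<in> measurable (ball_space q m) (count_space UNIV)"
proof -
  have eq: "(\<lambda>\<omega>::nat\<Rightarrow>nat. \<omega> i = \<omega> j) = (\<lambda>\<omega>. \<exists>v. \<omega> i = v \<and> \<omega> j = v)" for i j by auto
  have [measurable]: "(\<lambda>\<omega>::nat\<Rightarrow>nat. \<omega> i = \<omega> j) \<in> measurable (ball_space q m) (count_space UNIV)" for i j
    unfolding eq ball_space_def by measurable
  show ?thesis unfolding first_collision_def[abs_def] by measurable
qed

lemma EB_sum:
  assumes nn: "\<forall>i\<in>{1..m}. q i \<ge> 0" and s: "(\<Sum>i=1..m. q i) = 1"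
  shows "expected_B q m = (\<Sum>k\<le>m. \<Sum>f\<in>Inj m k. \<Prod>i<k. q (f i))"
proof -
  interpret P: prob_space "ball_space q m" by (rule prob_ball)
  let ?C = "\<lambda>f k. {\<omega>. \<forall>i\<in>{..<k}. \<omega> i = f i}"
  have meas: "(\<lambda>\<omega>. real (first_collision \<omega>)) \<in> borel_measurable (ball_space q m)"
    by (rule measurable_compose[OF fc_meas]) simp
  have "expected_B q m = (\<integral>\<omega>. (\<Sum>k\<le>m. \<Sum>f\<in>Inj m k. indicator (?C f k) \<omega> :: real) \<partial>ball_space q m)"
    unfolding expected_B_def
  proof (rule integral_cong_AE)
    show "AE \<omega> in ball_space q m. real (first_collision \<omega>) = (\<Sum>k\<le>m. \<Sum>f\<in>Inj m k. indicator (?C f k) \<omega>)"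
    proof (rule eventually_mono[OF AE_ball[OF nn s]])
      fix x :: "nat \<Rightarrow> nat" assume h: "\<forall>i. x i \<in> {1..m}"
      show "real (first_collision x) = (\<Sum>k\<le>m. \<Sum>f\<in>Inj m k. indicator (?C f k) x)"
        unfolding fc_count[OF h] by (intro sum.cong refl) (rule ind_sum[OF h, symmetric])
    qed
    show "(\<lambda>\<omega>. \<Sum>k\<le>m. \<Sum>f\<in>Inj m k. indicator (?C f k) \<omega> :: real) \<in> borel_measurable (ball_space q m)"
      using cyl_measure(1)[where q=q and m=m, OF nn s] by (intro borel_measurable_sum borel_measurable_indicator) auto
  qed (rule meas)
  also have "\<dots> = (\<Sum>k\<le>m. \<Sum>f\<in>Inj m k. measure (ball_space q m) (?C f k))"
  proof -
    have ev: "?C f k \<in> sets (ball_space q m)" for f k using cyl_measure(1)[where q=q and m=m, OF nn s] by auto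
    have int: "integrable (ball_space q m) (indicator (?C f k) :: _ \<Rightarrow> real)" for f k
      using ev by (intro integrable_real_indicator) (auto simp: P.emeasure_eq_measure)
    have "(\<integral>\<omega>. (\<Sum>k\<le>m. \<Sum>f\<in>Inj m k. indicator (?C f k) \<omega> :: real) \<partial>ball_space q m)
       = (\<Sum>k\<le>m. (\<integral>\<omega>. (\<Sum>f\<in>Inj m k. indicator (?C f k) \<omega> :: real) \<partial>ball_space q m))"
      by (rule Bochner_Integration.integral_sum) (rule Bochner_Integration.integrable_sum, rule int)
    also have "\<dots> = (\<Sum>k\<le>m. \<Sum>f\<in>Inj m k. (\<integral>\<omega>. (indicator (?C f k) \<omega> :: real) \<partial>ball_space q m))"
      by (intro sum.cong refl Bochner_Integration.integral_sum int)
    also have "\<dots> = (\<Sum>k\<le>m. \<Sum>f\<in>Inj m k. measure (ball_space q m) (?C f k))"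
      by (intro sum.cong refl) (simp add: space_ball)
    finally show ?thesis .
  qed
  also have "\<dots> = (\<Sum>k\<le>m. \<Sum>f\<in>Inj m k. \<Prod>i<k. q (f i))"
  proof (intro sum.cong refl)
    fix k f assume "f \<in> Inj m k"
    then have fi: "i < k \<Longrightarrow> f i \<in> {1..m}" for i unfolding Inj_def by blast
    have "measure (ball_space q m) (?C f k) = (\<Prod>i<k. pmf (urn_pmf q m) (f i))"
      by (rule cyl_measure(2)[where q=q and m=m, OF nn s])
    also have "\<dots> = (\<Prod>i<k. q (f i))"
    proof (intro prod.cong refl)
      fix i assume "i \<in> {..<k}"
      then have "f i \<in> {1..m}" using fi by auto
      then show "pmf (urn_pmf q m) (f i) = q (f i)" unfolding pmf_urn[where q=q and m=m, OF nn s] by simp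
    qed
    finally show "measure (ball_space q m) (?C f k) = (\<Prod>i<k. q (f i))" .
  qed
  finally show ?thesis .
qed


lemma card_inj_fact:
  assumes "finite S" "card S = k"
  shows "card {f \<in> {..<k} \<rightarrow>\<^sub>E S. inj_on f {..<k}} = fact k"
proof -
  have "card {f \<in> {..<k} \<rightarrow>\<^sub>E S. inj_on f {..<k}} = card S ^ (card {..<k} - card {..<k}) * prod ((-) (card S)) {0..<card {..<k}}"
    by (rule card_inj_on_subset_funcset) (use assms in auto)
  also have "\<dots> = (\<Prod>i = 0..<k. k - i)" using assms by simp
  also have "\<dots> = fact k" by (simp add: fact_prod_rev)
  finally show ?thesis .
qed

lemma inj_sum:
  "(\<Sum>f\<in>Inj m k. \<Prod>i<k. q (f i)) = (\<Sum>S\<in>{S. S \<subseteq> {1..m} \<and> card S = k}. fact k * prod q S)"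
proof -
  let ?T = "{S. S \<subseteq> {1..m} \<and> card S = k}"
  have fT: "finite ?T" by (rule finite_subset[of _ "Pow {1..m}"]) auto
  have "(\<Sum>f\<in>Inj m k. \<Prod>i<k. q (f i)) = (\<Sum>f\<in>Inj m k. prod q (f ` {..<k}))"
  proof (intro sum.cong refl)
    fix f assume "f \<in> Inj m k"
    then have "inj_on f {..<k}" by (simp add: Inj_def)
    then show "(\<Prod>i<k. q (f i)) = prod q (f ` {..<k})" by (simp add: prod.reindex)
  qed
  also have "\<dots> = (\<Sum>S\<in>?T. \<Sum>f\<in>{f. f \<in> Inj m k \<and> f ` {..<k} = S}. prod q (f ` {..<k}))"
  proof (rule sum.group[symmetric, OF finite_Inj fT])
    show "(\<lambda>f. f ` {..<k}) ` Inj m k \<subseteq> ?T"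
    proof
      fix S assume "S \<in> (\<lambda>f. f ` {..<k}) ` Inj m k"
      then obtain f where f: "f \<in> Inj m k" "S = f ` {..<k}" by blast
      then show "S \<in> ?T" unfolding Inj_def using card_image[of f "{..<k}"] by auto
    qed
  qed
  also have "\<dots> = (\<Sum>S\<in>?T. fact k * prod q S)"
  proof (intro sum.cong refl)
    fix S assume S: "S \<in> ?T"
    then have fS: "finite S" using finite_subset by blast
    have eq: "{f. f \<in> Inj m k \<and> f ` {..<k} = S} = {f \<in> {..<k} \<rightarrow>\<^sub>E S. inj_on f {..<k}}"
    proof (intro equalityI subsetI)
      fix f assume "f \<in> {f. f \<in> Inj m k \<and> f ` {..<k} = S}"
      then show "f \<in> {f \<in> {..<k} \<rightarrow>\<^sub>E S. inj_on f {..<k}}" unfolding Inj_def by (auto simp: PiE_def)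
    next
      fix f assume f: "f \<in> {f \<in> {..<k} \<rightarrow>\<^sub>E S. inj_on f {..<k}}"
      then have sub: "f ` {..<k} \<subseteq> S" by (auto simp: PiE_def)
      have "card (f ` {..<k}) = card S" using f S card_image[of f "{..<k}"] by auto
      then have "f ` {..<k} = S" using card_subset_eq[OF fS sub] by simp
      moreover have "f \<in> Inj m k" using f S unfolding Inj_def by (auto simp: PiE_def)
      ultimately show "f \<in> {f. f \<in> Inj m k \<and> f ` {..<k} = S}" by simp
    qed
    have "(\<Sum>f\<in>{f. f \<in> Inj m k \<and> f ` {..<k} = S}. prod q (f ` {..<k})) = (\<Sum>f\<in>{f. f \<in> Inj m k \<and> f ` {..<k} = S}. prod q S)"
      by (intro sum.cong refl) auto
    also have "\<dots> = of_nat (card {f \<in> {..<k} \<rightarrow>\<^sub>E S. inj_on f {..<k}}) * prod q S"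
      by (simp add: eq)
    also have "\<dots> = fact k * prod q S" using card_inj_fact[OF fS] S by simp
    finally show "(\<Sum>f\<in>{f. f \<in> Inj m k \<and> f ` {..<k} = S}. prod q (f ` {..<k})) = fact k * prod q S" .
  qed
  finally show ?thesis .
qed

lemma EB_subsets:
  assumes nn: "\<forall>i\<in>{1..m}. q i \<ge> 0" and s: "(\<Sum>i=1..m. q i) = 1"
  shows "expected_B q m = (\<Sum>S\<in>Pow {1..m}. fact (card S) * prod q S)"
proof -
  have "expected_B q m = (\<Sum>k\<le>m. \<Sum>S\<in>{S. S \<subseteq> {1..m} \<and> card S = k}. fact k * prod q S)"
    unfolding EB_sum[OF nn s] inj_sum ..
  also have "\<dots> = (\<Sum>k\<le>m. \<Sum>S\<in>{S \<in> Pow {1..m}. card S = k}. fact (card S) * prod q S)"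
    by (intro sum.cong refl) auto
  also have "\<dots> = (\<Sum>S\<in>Pow {1..m}. fact (card S) * prod q S)"
  proof (rule sum.group)
    show "card ` Pow {1..m} \<subseteq> {..m}"
      using card_mono[of "{1..m}"] by fastforce
  qed auto
  finally show ?thesis .
qed



lemma EB_integral:
  assumes nn: "\<forall>i\<in>{1..m}. q i \<ge> 0" and s: "(\<Sum>i=1..m. q i) = 1"
  shows "ennreal (expected_B q m) = (\<integral>\<^sup>+t. ennreal (exp (-t) * (\<Prod>i\<in>{1..m}. 1 + q i * t)) * indicator {0..} t \<partial>lborel)"
proof -
  let ?U = "{1..m::nat}"
  have pw: "ennreal (exp (-t) * (\<Prod>i\<in>?U. 1 + q i * t)) * indicator {0..} t =
     (\<Sum>S\<in>Pow ?U. ennreal (prod q S) * (ennreal (t ^ card S * exp (-t)) * indicator {0..} t))" for t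
  proof (cases "t \<ge> 0")
    case True
    have "(\<Prod>i\<in>?U. 1 + q i * t) = (\<Prod>i\<in>?U. q i * t + 1)" by (simp add: add.commute)
    also have "\<dots> = (\<Sum>S\<in>Pow ?U. (\<Prod>i\<in>S. q i * t) * (\<Prod>i\<in>?U - S. 1))"
      by (rule prod_add) simp
    also have "\<dots> = (\<Sum>S\<in>Pow ?U. prod q S * t ^ card S)"
      by (simp add: prod.distrib)
    finally have "exp (-t) * (\<Prod>i\<in>?U. 1 + q i * t) = (\<Sum>S\<in>Pow ?U. prod q S * (t ^ card S * exp (-t)))"
      by (simp add: sum_distrib_left mult_ac)
    moreover have "\<And>S. S \<in> Pow ?U \<Longrightarrow> prod q S \<ge> 0" using nn by (auto intro!: prod_nonneg)
    ultimately have "ennreal (exp (-t) * (\<Prod>i\<in>?U. 1 + q i * t)) = (\<Sum>S\<in>Pow ?U. ennreal (prod q S * (t ^ card S * exp (-t))))"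
      using True by (subst sum_ennreal) (auto intro!: mult_nonneg_nonneg)
    also have "\<dots> = (\<Sum>S\<in>Pow ?U. ennreal (prod q S) * ennreal (t ^ card S * exp (-t)))"
      using \<open>\<And>S. S \<in> Pow ?U \<Longrightarrow> prod q S \<ge> 0\<close> True by (intro sum.cong refl ennreal_mult) auto
    finally show ?thesis using True by simp
  qed (simp add: indicator_def)
  have "(\<integral>\<^sup>+t. ennreal (exp (-t) * (\<Prod>i\<in>?U. 1 + q i * t)) * indicator {0..} t \<partial>lborel)
     = (\<Sum>S\<in>Pow ?U. (\<integral>\<^sup>+t. ennreal (prod q S) * (ennreal (t ^ card S * exp (-t)) * indicator {0..} t) \<partial>lborel))"
    unfolding pw by (rule nn_integral_sum) measurable
  also have "\<dots> = (\<Sum>S\<in>Pow ?U. ennreal (prod q S) * ennreal (fact (card S)))"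
    by (intro sum.cong refl, subst nn_integral_cmult) (auto simp: nn_intergal_power_times_exp_Ici)
  also have "\<dots> = ennreal (\<Sum>S\<in>Pow ?U. fact (card S) * prod q S)"
  proof -
    have pn: "S \<subseteq> ?U \<Longrightarrow> 0 \<le> prod q S" for S using nn by (auto intro!: prod_nonneg)
    have "(\<Sum>S\<in>Pow ?U. ennreal (prod q S) * ennreal (fact (card S))) = (\<Sum>S\<in>Pow ?U. ennreal (fact (card S) * prod q S))"
      using pn by (intro sum.cong refl) (auto simp: ennreal_mult' mult.commute)
    also have "\<dots> = ennreal (\<Sum>S\<in>Pow ?U. fact (card S) * prod q S)"
      using pn by (intro sum_ennreal) auto
    finally show ?thesis .
  qed
  finally show ?thesis unfolding EB_subsets[OF nn s] ..
qed



lemma ln_lower: assumes "(x::real) \<ge> 0" shows "x - x^2/2 \<le> ln (1 + x)"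
proof -
  let ?g = "\<lambda>y::real. ln (1 + y) - y + y^2/2"
  have "?g 0 \<le> ?g x"
  proof (rule deriv_nonneg_imp_mono[where g = "\<lambda>y::real. ln (1 + y) - y + y^2/2" and g' = "\<lambda>y. 1/(1+y) - 1 + y"])
    fix y :: real assume "y \<in> {0..x}"
    then have y: "y \<ge> 0" by auto
    show "(?g has_real_derivative 1/(1+y) - 1 + y) (at y)"
      using y by (auto intro!: derivative_eq_intros simp: field_simps)
    have "1/(1+y) - 1 + y = y^2/(1+y)" using y by (simp add: field_simps power2_eq_square)
    then show "1/(1+y) - 1 + y \<ge> 0" using y by simp
  qed (use assms in auto)
  then show ?thesis by simp
qed

lemma ln_upper: assumes "(x::real) \<ge> 0" shows "ln (1 + x) \<le> x - x^2/2 + x^3/3"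
proof -
  let ?g = "\<lambda>y::real. y - y^2/2 + y^3/3 - ln (1 + y)"
  have "?g 0 \<le> ?g x"
  proof (rule deriv_nonneg_imp_mono[where g = "\<lambda>y::real. y - y^2/2 + y^3/3 - ln (1 + y)" and g' = "\<lambda>y. 1 - y + y^2 - 1/(1+y)"])
    fix y :: real assume "y \<in> {0..x}"
    then have y: "y \<ge> 0" by auto
    show "(?g has_real_derivative 1 - y + y^2 - 1/(1+y)) (at y)"
      using y by (auto intro!: derivative_eq_intros simp: field_simps power2_eq_square)
    have "1 - y + y^2 - 1/(1+y) = y^3/(1+y)" using y by (simp add: field_simps power2_eq_square power3_eq_cube)
    then show "1 - y + y^2 - 1/(1+y) \<ge> 0" using y by simp
  qed (use assms in auto)
  then show ?thesis by simp
qed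

lemma exp_lower: assumes "(x::real) \<ge> 0" shows "exp (x - x^2/2) \<le> 1 + x"
proof -
  have "exp (x - x^2/2) \<le> exp (ln (1 + x))" using ln_lower[OF assms] by simp
  then show ?thesis using assms by simp
qed

lemma exp_upper: assumes "(x::real) \<ge> 0" shows "1 + x \<le> exp (x - x^2/2 + x^3/3)"
proof -
  have "exp (ln (1 + x)) \<le> exp (x - x^2/2 + x^3/3)" using ln_upper[OF assms] by simp
  then show ?thesis using assms by simp
qed



definition Phi :: "(nat \<Rightarrow> real) \<Rightarrow> nat \<Rightarrow> real \<Rightarrow> real" where
  "Phi q m t = exp (-t) * (\<Prod>i\<in>{1..m}. 1 + q i * t)"

lemma sum_aux:
  assumes s: "(\<Sum>i=1..m. q i) = 1"
  shows "(\<Sum>i=1..m. q i * t - (q i * t)^2/2 + c * (q i * t)^3) = t - alpha q m 2 * t^2/2 + c * alpha q m 3 * t^3"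
proof -
  have "(\<Sum>i=1..m. q i * t - (q i * t)^2/2 + c * (q i * t)^3) = (\<Sum>i=1..m. q i) * t - (\<Sum>i=1..m. q i^2) * t^2/2 + c * (\<Sum>i=1..m. q i^3) * t^3"
    by (simp add: sum.distrib sum_subtractf sum_distrib_left sum_distrib_right sum_divide_distrib power_mult_distrib mult_ac)
  then show ?thesis using s by (simp add: alpha_def)
qed

lemma phi_lower:
  assumes nn: "\<forall>i\<in>{1..m}. q i \<ge> 0" and s: "(\<Sum>i=1..m. q i) = 1" and t: "t \<ge> 0"
  shows "exp (- alpha q m 2 * t^2/2) \<le> Phi q m t"
proof -
  have "(\<Prod>i\<in>{1..m}. exp (q i * t - (q i * t)^2/2)) \<le> (\<Prod>i\<in>{1..m}. 1 + q i * t)"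
    using nn t by (intro prod_mono) (auto intro!: exp_lower)
  moreover have "(\<Prod>i\<in>{1..m}. exp (q i * t - (q i * t)^2/2)) = exp (t - alpha q m 2 * t^2/2)"
    using sum_aux[OF s, of t 0] by (simp add: exp_sum[symmetric])
  ultimately have "exp (t - alpha q m 2 * t^2/2) \<le> (\<Prod>i\<in>{1..m}. 1 + q i * t)" by simp
  then have "exp (-t) * exp (t - alpha q m 2 * t^2/2) \<le> exp (-t) * (\<Prod>i\<in>{1..m}. 1 + q i * t)" by simp
  then show ?thesis unfolding Phi_def by (simp add: exp_add[symmetric])
qed

lemma phi_upper:
  assumes nn: "\<forall>i\<in>{1..m}. q i \<ge> 0" and s: "(\<Sum>i=1..m. q i) = 1" and t: "t \<ge> 0"
  shows "Phi q m t \<le> exp (- alpha q m 2 * t^2/2 + alpha q m 3 * t^3/3)"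
proof -
  have "(\<Prod>i\<in>{1..m}. 1 + q i * t) \<le> (\<Prod>i\<in>{1..m}. exp (q i * t - (q i * t)^2/2 + (1/3) * (q i * t)^3))"
    using nn t by (intro prod_mono) (auto intro!: order.trans[OF exp_upper] simp: divide_simps)
  moreover have "(\<Prod>i\<in>{1..m}. exp (q i * t - (q i * t)^2/2 + (1/3) * (q i * t)^3)) = exp (t - alpha q m 2 * t^2/2 + (1/3) * alpha q m 3 * t^3)"
    using sum_aux[OF s, of t "1/3"] by (simp add: exp_sum[symmetric])
  ultimately have "exp (-t) * (\<Prod>i\<in>{1..m}. 1 + q i * t) \<le> exp (-t) * exp (t - alpha q m 2 * t^2/2 + (1/3) * alpha q m 3 * t^3)" by simp
  then show ?thesis unfolding Phi_def by (simp add: exp_add[symmetric])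
qed



lemma aux4: "(b::real) * c = 1 \<Longrightarrow> a * (p * e) = (c * p) * (a * b * e)"
proof -
  assume h: "b * c = 1"
  have "(c * p) * (a * b * e) = a * (p * e) * (b * c)" by (simp only: mult_ac)
  also have "\<dots> = a * (p * e)" using h by (simp only: mult_1_right)
  finally show ?thesis by (rule sym)
qed

lemma phi_tail:
  assumes nn: "\<forall>i\<in>{1..m}. q i \<ge> 0" and s: "(\<Sum>i=1..m. q i) = 1"
    and small: "\<forall>i\<in>{1..m}. q i * \<tau> \<le> 1" and tau: "\<tau> > 0" and t: "t \<ge> \<tau>"
  shows "Phi q m t \<le> Phi q m \<tau> * exp (- (alpha q m 2 * \<tau> / 2) * (t - \<tau>))"
proof -
  have fac: "1 + q i * t \<le> (1 + q i * \<tau>) * exp ((q i - q i^2 * \<tau> / 2) * (t - \<tau>))" if i: "i \<in> {1..m}" for i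
  proof -
    have qi: "q i \<ge> 0" "q i * \<tau> \<le> 1" using nn small i by auto
    define y where "y = q i * \<tau>"
    have y: "0 \<le> y" "y \<le> 1" using qi tau by (auto simp: y_def)
    have pos: "1 + q i * \<tau> > 0" using qi tau by (intro add_pos_nonneg) auto
    have "1 + q i * t = (1 + q i * \<tau>) * (1 + q i * (t - \<tau>) / (1 + q i * \<tau>))"
      using pos by (simp add: field_simps)
    also have "\<dots> \<le> (1 + q i * \<tau>) * exp (q i * (t - \<tau>) / (1 + q i * \<tau>))"
      using pos by (intro mult_left_mono exp_ge_add_one_self) auto
    also have "q i * (t - \<tau>) / (1 + q i * \<tau>) \<le> (q i - q i^2 * \<tau> / 2) * (t - \<tau>)"
    proof -
      have e: "(1 - y/2) * (1 + y) = 1 + y * (1 - y) / 2" by (simp add: field_simps)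
      have "0 \<le> y * (1 - y)" using y by (intro mult_nonneg_nonneg) auto
      then have "1 \<le> (1 - y/2) * (1 + y)" unfolding e by simp
      then have "1 / (1 + y) \<le> 1 - y/2" using y by (subst divide_le_eq) auto
      then have "q i * (t - \<tau>) * (1 / (1 + y)) \<le> q i * (t - \<tau>) * (1 - y/2)"
        using qi t by (intro mult_left_mono) auto
      then show ?thesis by (simp add: y_def field_simps power2_eq_square)
    qed
    then have "(1 + q i * \<tau>) * exp (q i * (t - \<tau>) / (1 + q i * \<tau>)) \<le> (1 + q i * \<tau>) * exp ((q i - q i^2 * \<tau> / 2) * (t - \<tau>))"
      using pos by (intro mult_left_mono) auto
    finally show ?thesis .
  qed
  have "(\<Prod>i\<in>{1..m}. 1 + q i * t) \<le> (\<Prod>i\<in>{1..m}. (1 + q i * \<tau>) * exp ((q i - q i^2 * \<tau> / 2) * (t - \<tau>)))"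
    using nn t tau by (intro prod_mono conjI fac) (auto intro!: add_nonneg_nonneg mult_nonneg_nonneg)
  also have "\<dots> = (\<Prod>i\<in>{1..m}. 1 + q i * \<tau>) * exp (\<Sum>i\<in>{1..m}. (q i - q i^2 * \<tau> / 2) * (t - \<tau>))"
    by (simp add: prod.distrib exp_sum)
  also have "(\<Sum>i\<in>{1..m}. (q i - q i^2 * \<tau> / 2) * (t - \<tau>)) = (1 - alpha q m 2 * \<tau> / 2) * (t - \<tau>)"
    using s by (simp add: alpha_def sum_distrib_right sum_subtractf sum_divide_distrib[symmetric] sum_distrib_left[symmetric] mult_ac)
  finally have P: "(\<Prod>i\<in>{1..m}. 1 + q i * t) \<le> (\<Prod>i\<in>{1..m}. 1 + q i * \<tau>) * exp ((1 - alpha q m 2 * \<tau> / 2) * (t - \<tau>))" .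
  have "Phi q m t \<le> exp (-t) * ((\<Prod>i\<in>{1..m}. 1 + q i * \<tau>) * exp ((1 - alpha q m 2 * \<tau> / 2) * (t - \<tau>)))"
    unfolding Phi_def by (intro mult_left_mono P) auto
  also have "\<dots> = (exp (-\<tau>) * (\<Prod>i\<in>{1..m}. 1 + q i * \<tau>)) * (exp (-t) * exp \<tau> * exp ((1 - alpha q m 2 * \<tau> / 2) * (t - \<tau>)))"
    by (rule aux4) (simp add: exp_minus)
  also have "exp (-t) * exp \<tau> * exp ((1 - alpha q m 2 * \<tau> / 2) * (t - \<tau>)) = exp (- (alpha q m 2 * \<tau> / 2) * (t - \<tau>))"
    by (simp add: exp_add[symmetric] algebra_simps)
  finally show ?thesis unfolding Phi_def .
qed



lemma gauss_nn:
  assumes a: "a > (0::real)"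
  shows "(\<integral>\<^sup>+t. ennreal (exp (- a * t^2 / 2)) * indicator {0..} t \<partial>lborel) = ennreal (sqrt (pi / (2 * a)))"
proof -
  let ?f = "(\<lambda>x::real. ennreal (indicator {0..} x * exp (- (x\<^sup>2))))"
  have "(\<integral>\<^sup>+x. ?f x \<partial>lborel) = ennreal (sqrt pi / 2)"
    using gaussian_moment_0 by (subst nn_integral_eq_integrable) (auto simp: has_bochner_integral_iff)
  define c where "c = sqrt (a / 2)"
  have c: "c > 0" using a by (simp add: c_def)
  have "(\<integral>\<^sup>+x. ?f x \<partial>lborel) = ennreal \<bar>c\<bar> * (\<integral>\<^sup>+x. ?f (0 + c * x) \<partial>lborel)"
    using c by (intro nn_integral_real_affine) auto
  also have "(\<lambda>x. ?f (0 + c * x)) = (\<lambda>t. ennreal (exp (- a * t^2 / 2)) * indicator {0..} t)"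
  proof
    fix t :: real
    have "(c * t)^2 = a * t^2 / 2" using a by (simp add: c_def power_mult_distrib)
    moreover have "(0 \<le> c * t) = (0 \<le> t)" using c by (simp add: zero_le_mult_iff)
    ultimately show "?f (0 + c * t) = ennreal (exp (- a * t^2 / 2)) * indicator {0..} t"
      by (simp add: indicator_def)
  qed
  finally have "ennreal (sqrt pi / 2) = ennreal c * (\<integral>\<^sup>+t. ennreal (exp (- a * t^2 / 2)) * indicator {0..} t \<partial>lborel)"
    using c \<open>(\<integral>\<^sup>+x. ?f x \<partial>lborel) = ennreal (sqrt pi / 2)\<close> by simp
  then have "ennreal (sqrt pi / 2) / ennreal c = ((\<integral>\<^sup>+t. ennreal (exp (- a * t^2 / 2)) * indicator {0..} t \<partial>lborel) * ennreal c) / ennreal c"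
    by (simp only: mult.commute)
  also have "\<dots> = (\<integral>\<^sup>+t. ennreal (exp (- a * t^2 / 2)) * indicator {0..} t \<partial>lborel)"
    using c by (intro ennreal_mult_divide_eq) auto
  finally have "(\<integral>\<^sup>+t. ennreal (exp (- a * t^2 / 2)) * indicator {0..} t \<partial>lborel) = ennreal (sqrt pi / 2) / ennreal c" by (rule sym)
  also have "\<dots> = ennreal (sqrt pi / 2 / c)" using c by (simp add: divide_ennreal)
  also have "sqrt pi / 2 / c = sqrt (pi / (2 * a))"
    using a unfolding c_def by (simp add: real_sqrt_divide real_sqrt_mult field_simps)
  finally show ?thesis .
qed

lemma expo_nn:
  assumes b: "b > (0::real)"
  shows "(\<integral>\<^sup>+t. ennreal (exp (- b * (t - s))) * indicator {s..} t \<partial>lborel) = ennreal (1 / b)"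
proof -
  let ?g = "\<lambda>t::real. ennreal (exp (- b * (t - s))) * indicator {s..} t"
  have "(\<integral>\<^sup>+t. ?g t \<partial>lborel) = ennreal \<bar>1/b\<bar> * (\<integral>\<^sup>+x. ?g (s + (1/b) * x) \<partial>lborel)"
    using b by (intro nn_integral_real_affine) auto
  also have "(\<lambda>x. ?g (s + (1/b) * x)) = (\<lambda>x. ennreal (x^0 * exp (-x)) * indicator {0..} x)"
  proof
    fix x :: real
    have "(s \<le> s + (1/b) * x) = (0 \<le> x)" using b by (simp add: zero_le_divide_iff)
    then show "?g (s + (1/b) * x) = ennreal (x^0 * exp (-x)) * indicator {0..} x"
      using b by (simp add: indicator_def)
  qed
  also have "(\<integral>\<^sup>+x. ennreal (x^0 * exp (-x)) * indicator {0..} x \<partial>lborel) = 1"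
    using nn_intergal_power_times_exp_Ici[of 0] by simp
  finally show ?thesis using b by simp
qed



lemma alpha2_pos:
  assumes nn: "\<forall>i\<in>{1..m}. q i \<ge> 0" and s: "(\<Sum>i=1..m. q i) = 1"
  shows "alpha q m 2 > 0"
proof -
  obtain i where i: "i \<in> {1..m}" "q i \<noteq> 0"
    using s by (metis (mono_tags, lifting) sum.neutral zero_neq_one)
  show ?thesis unfolding alpha_def
    by (rule sum_pos2[OF _ i(1)]) (use i in auto)
qed

lemma alpha3_nonneg:
  assumes nn: "\<forall>i\<in>{1..m}. q i \<ge> 0"
  shows "alpha q m 3 \<ge> 0"
  unfolding alpha_def using nn by (intro sum_nonneg) auto

lemma Phi_nonneg:
  assumes nn: "\<forall>i\<in>{1..m}. q i \<ge> 0" and t: "t \<ge> 0"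
  shows "Phi q m t \<ge> 0"
  unfolding Phi_def using nn t by (intro mult_nonneg_nonneg prod_nonneg) auto

lemma EB_lower:
  assumes nn: "\<forall>i\<in>{1..m}. q i \<ge> 0" and s: "(\<Sum>i=1..m. q i) = 1"
  shows "sqrt (pi / (2 * alpha q m 2)) \<le> expected_B q m"
proof -
  have a: "alpha q m 2 > 0" by (rule alpha2_pos[OF nn s])
  have "ennreal (sqrt (pi / (2 * alpha q m 2))) = (\<integral>\<^sup>+t. ennreal (exp (- alpha q m 2 * t^2 / 2)) * indicator {0..} t \<partial>lborel)"
    by (rule gauss_nn[OF a, symmetric])
  also have "\<dots> \<le> (\<integral>\<^sup>+t. ennreal (Phi q m t) * indicator {0..} t \<partial>lborel)"
  proof (intro nn_integral_mono)
    fix t :: real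
    show "ennreal (exp (- alpha q m 2 * t^2 / 2)) * indicator {0..} t \<le> ennreal (Phi q m t) * indicator {0..} t"
    proof (cases "t \<ge> 0")
      case True
      then show ?thesis using phi_lower[OF nn s True] by (simp add: ennreal_leI)
    qed (simp add: indicator_def)
  qed
  also have "\<dots> = ennreal (expected_B q m)"
    unfolding EB_integral[OF nn s] Phi_def ..
  finally have "ennreal (sqrt (pi / (2 * alpha q m 2))) \<le> ennreal (expected_B q m)" .
  moreover have "pi / (2 * alpha q m 2) > 0" using a by simp
  ultimately show ?thesis
    by (subst (asm) ennreal_le_iff2) (use a in \<open>auto simp: EB_subsets[OF nn s] not_le[symmetric]\<close>)
qed



lemma EB_upper:
  assumes nn: "\<forall>i\<in>{1..m}. q i \<ge> 0" and s: "(\<Sum>i=1..m. q i) = 1"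
    and small: "\<forall>i\<in>{1..m}. q i * \<tau> \<le> 1" and tau: "\<tau> > 0"
  shows "expected_B q m \<le> exp (alpha q m 3 * \<tau>^3 / 3) * (sqrt (pi / (2 * alpha q m 2)) + 2 / (alpha q m 2 * \<tau>))"
proof -
  define a where "a = alpha q m 2"
  define b where "b = alpha q m 3"
  define c where "c = b * \<tau>^3 / 3"
  define \<beta> where "\<beta> = a * \<tau> / 2"
  have a: "a > 0" unfolding a_def by (rule alpha2_pos[OF nn s])
  have b: "b \<ge> 0" unfolding b_def by (rule alpha3_nonneg[OF nn])
  have beta: "\<beta> > 0" using a tau by (simp add: \<beta>_def)
  let ?g1 = "\<lambda>t. ennreal (exp (- a * t^2 / 2)) * indicator {0..} t"
  let ?g2 = "\<lambda>t. ennreal (exp (- \<beta> * (t - \<tau>))) * indicator {\<tau>..} t"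
  have pw: "ennreal (Phi q m t) * indicator {0..} t \<le> ennreal (exp c) * ?g1 t + ennreal (exp c) * ?g2 t" for t
  proof (cases "t \<ge> 0")
    case False then show ?thesis by (simp add: indicator_def)
  next
    case t0: True
    show ?thesis
    proof (cases "t \<le> \<tau>")
      case True
      have "b * t^3 \<le> b * \<tau>^3" using b t0 True by (intro mult_left_mono power_mono) auto
      then have "exp (- a * t^2 / 2 + b * t^3 / 3) \<le> exp (- a * t^2 / 2 + c)"
        unfolding c_def by simp
      then have "Phi q m t \<le> exp (- a * t^2 / 2 + c)"
        using phi_upper[OF nn s t0] unfolding a_def b_def by linarith
      also have "\<dots> = exp c * exp (- a * t^2 / 2)" by (simp add: exp_add[symmetric] add.commute)
      finally have "ennreal (Phi q m t) \<le> ennreal (exp c) * ennreal (exp (- a * t^2 / 2))"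
        by (simp add: ennreal_mult[symmetric] ennreal_leI)
      then show ?thesis using t0 by (simp add: indicator_def add_increasing2)
    next
      case False
      have "Phi q m \<tau> \<le> exp (- a * \<tau>^2 / 2 + b * \<tau>^3 / 3)"
        using phi_upper[OF nn s] tau unfolding a_def b_def by simp
      also have "\<dots> \<le> exp c" using a unfolding c_def by simp
      finally have P: "Phi q m \<tau> \<le> exp c" .
      have "Phi q m t \<le> Phi q m \<tau> * exp (- \<beta> * (t - \<tau>))"
        using phi_tail[OF nn s small tau] False unfolding \<beta>_def a_def by simp
      also have "\<dots> \<le> exp c * exp (- \<beta> * (t - \<tau>))" using P by (intro mult_right_mono) auto
      finally have "ennreal (Phi q m t) \<le> ennreal (exp c) * ennreal (exp (- \<beta> * (t - \<tau>)))"
        by (simp add: ennreal_mult[symmetric] ennreal_leI)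
      then show ?thesis using t0 False by (simp add: indicator_def add_increasing)
    qed
  qed
  have "ennreal (expected_B q m) = (\<integral>\<^sup>+t. ennreal (Phi q m t) * indicator {0..} t \<partial>lborel)"
    unfolding EB_integral[OF nn s] Phi_def ..
  also have "\<dots> \<le> (\<integral>\<^sup>+t. ennreal (exp c) * ?g1 t + ennreal (exp c) * ?g2 t \<partial>lborel)"
    by (intro nn_integral_mono pw)
  also have "\<dots> = (\<integral>\<^sup>+t. ennreal (exp c) * ?g1 t \<partial>lborel) + (\<integral>\<^sup>+t. ennreal (exp c) * ?g2 t \<partial>lborel)"
    by (rule nn_integral_add) measurable
  also have "\<dots> = ennreal (exp c) * ennreal (sqrt (pi / (2 * a))) + ennreal (exp c) * ennreal (1 / \<beta>)"
  proof -
    have "(\<integral>\<^sup>+t. ennreal (exp c) * ?g1 t \<partial>lborel) = ennreal (exp c) * (\<integral>\<^sup>+t. ?g1 t \<partial>lborel)"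
      by (rule nn_integral_cmult) measurable
    moreover have "(\<integral>\<^sup>+t. ennreal (exp c) * ?g2 t \<partial>lborel) = ennreal (exp c) * (\<integral>\<^sup>+t. ?g2 t \<partial>lborel)"
      by (rule nn_integral_cmult) measurable
    ultimately show ?thesis by (simp only: gauss_nn[OF a] expo_nn[OF beta])
  qed
  also have "\<dots> = ennreal (exp c * (sqrt (pi / (2 * a)) + 1 / \<beta>))"
  proof -
    have G: "sqrt (pi / (2 * a)) \<ge> 0" using a by simp
    have B: "1 / \<beta> \<ge> 0" using beta by simp
    have "ennreal (exp c * (sqrt (pi / (2 * a)) + 1 / \<beta>)) = ennreal (exp c * sqrt (pi / (2 * a)) + exp c * (1 / \<beta>))"
      by (simp only: distrib_left)
    also have "\<dots> = ennreal (exp c * sqrt (pi / (2 * a))) + ennreal (exp c * (1 / \<beta>))"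
      using G B by (intro ennreal_plus) auto
    also have "\<dots> = ennreal (exp c) * ennreal (sqrt (pi / (2 * a))) + ennreal (exp c) * ennreal (1 / \<beta>)"
      using G B by (simp only: ennreal_mult exp_ge_zero)
    finally show ?thesis by (rule sym)
  qed
  finally have le: "ennreal (expected_B q m) \<le> ennreal (exp c * (sqrt (pi / (2 * a)) + 1 / \<beta>))" .
  have "expected_B q m \<le> exp c * (sqrt (pi / (2 * a)) + 1 / \<beta>)"
  proof (rule ennreal_le_iff[THEN iffD1, OF _ le])
    show "0 \<le> exp c * (sqrt (pi / (2 * a)) + 1 / \<beta>)" using a beta by (intro mult_nonneg_nonneg add_nonneg_nonneg) auto
  qed
  moreover have "1 / \<beta> = 2 / (a * \<tau>)" by (simp add: \<beta>_def)
  ultimately show ?thesis by (simp add: a_def b_def c_def)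
qed



lemma ratio_gen:
  assumes "s > (0::real)" "r > 0" "w > 0" "\<tau> > 0"
  shows "2 / ((s * s) * \<tau>) / (r / (w * s)) = 2 * (w / r) / (s * \<tau>)"
  using assms by (simp add: field_simps)

lemma ratio_alg:
  assumes a: "a > (0::real)" and tau: "\<tau> > 0"
  shows "(2 / (a * \<tau>)) / sqrt (pi / (2 * a)) = 2 * sqrt (2 / pi) / (sqrt a * \<tau>)"
proof -
  have aa: "a = sqrt a * sqrt a" using a by simp
  have e1: "sqrt (pi / (2 * a)) = sqrt pi / (sqrt 2 * sqrt a)" by (simp add: real_sqrt_divide real_sqrt_mult)
  have e2: "sqrt (2 / pi) = sqrt 2 / sqrt pi" by (simp add: real_sqrt_divide)
  have "(2 / (a * \<tau>)) / sqrt (pi / (2 * a)) = 2 / ((sqrt a * sqrt a) * \<tau>) / (sqrt pi / (sqrt 2 * sqrt a))"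
    unfolding e1 using aa by simp
  also have "\<dots> = 2 * (sqrt 2 / sqrt pi) / (sqrt a * \<tau>)"
    using a tau by (intro ratio_gen) auto
  finally show ?thesis unfolding e2 .
qed

theorem theorem5:
  fixes p :: "nat \<Rightarrow> nat \<Rightarrow> real" and \<tau> :: "nat \<Rightarrow> real"
  assumes nonneg: "\<And>m i. m \<ge> 1 \<Longrightarrow> i \<in> {1..m} \<Longrightarrow> p m i \<ge> 0"
    and sum1: "\<And>m. m \<ge> 1 \<Longrightarrow> (\<Sum>i=1..m. p m i) = 1"
    and sorted: "\<And>m i j. m \<ge> 1 \<Longrightarrow> 1 \<le> i \<Longrightarrow> i \<le> j \<Longrightarrow> j \<le> m \<Longrightarrow> p m i \<le> p m j"
    and tau_pos: "\<And>m. m \<ge> 1 \<Longrightarrow> \<tau> m > 0"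
    and A: "\<And>m. m \<ge> 1 \<Longrightarrow> p m m * \<tau> m < 1"
    and B: "filterlim (\<lambda>m. sqrt (alpha (p m) m 2) * \<tau> m) at_top sequentially"
    and C: "(\<lambda>m. root 3 (alpha (p m) m 3) * \<tau> m) \<longlonglongrightarrow> 0"
  shows "(\<lambda>m. expected_B (p m) m) \<sim>[sequentially] (\<lambda>m. sqrt (pi / (2 * alpha (p m) m 2)))"
proof (rule asymp_equivI')
  define E where "E m = expected_B (p m) m" for m
  define G where "G m = sqrt (pi / (2 * alpha (p m) m 2))" for m
  define c where "c m = alpha (p m) m 3 * \<tau> m ^ 3 / 3" for m
  define u where "u m = sqrt (alpha (p m) m 2) * \<tau> m" for m
  define U where "U m = exp (c m) * (1 + 2 * sqrt (2 / pi) / u m)" for m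
  have facts: "1 \<le> E m / G m \<and> E m / G m \<le> U m" if m: "m \<ge> 1" for m
  proof -
    have nn: "\<forall>i\<in>{1..m}. p m i \<ge> 0" using nonneg m by auto
    have s: "(\<Sum>i=1..m. p m i) = 1" using sum1 m by auto
    have tau: "\<tau> m > 0" using tau_pos m by auto
    have small: "\<forall>i\<in>{1..m}. p m i * \<tau> m \<le> 1"
    proof
      fix i assume i: "i \<in> {1..m}"
      have "p m i \<le> p m m" using sorted[of m i m] m i by auto
      then have "p m i * \<tau> m \<le> p m m * \<tau> m" using tau by (intro mult_right_mono) auto
      then show "p m i * \<tau> m \<le> 1" using A[OF m] by linarith
    qed
    have a: "alpha (p m) m 2 > 0" by (rule alpha2_pos[OF nn s])
    have Gpos: "G m > 0" using a by (simp add: G_def)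
    have lo: "G m \<le> E m" unfolding G_def E_def by (rule EB_lower[OF nn s])
    have hi: "E m \<le> exp (c m) * (G m + 2 / (alpha (p m) m 2 * \<tau> m))"
      unfolding G_def E_def c_def by (rule EB_upper[OF nn s small tau])
    have "E m / G m \<le> exp (c m) * (G m + 2 / (alpha (p m) m 2 * \<tau> m)) / G m"
      using hi Gpos by (simp add: divide_right_mono)
    also have "\<dots> = exp (c m) * (1 + (2 / (alpha (p m) m 2 * \<tau> m)) / G m)"
      using Gpos by (simp add: field_simps)
    also have "(2 / (alpha (p m) m 2 * \<tau> m)) / G m = 2 * sqrt (2 / pi) / u m"
      unfolding G_def u_def by (rule ratio_alg[OF a tau])
    finally have "E m / G m \<le> U m" unfolding U_def .
    moreover have "1 \<le> E m / G m" using lo Gpos by simp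
    ultimately show ?thesis by simp
  qed
  have c0: "c \<longlonglongrightarrow> 0"
  proof -
    have "(\<lambda>m. (root 3 (alpha (p m) m 3) * \<tau> m) ^ 3 / 3) \<longlonglongrightarrow> 0 ^ 3 / 3"
      by (intro tendsto_intros C) auto
    moreover have "eventually (\<lambda>m. (root 3 (alpha (p m) m 3) * \<tau> m) ^ 3 / 3 = c m) sequentially"
    proof (rule eventually_sequentiallyI[of 1])
      fix m :: nat assume m: "m \<ge> 1"
      have nn: "\<forall>i\<in>{1..m}. p m i \<ge> 0" using nonneg m by auto
      have "root 3 (alpha (p m) m 3) ^ 3 = alpha (p m) m 3"
        using alpha3_nonneg[OF nn] by (simp add: real_root_pow_pos2)
      then show "(root 3 (alpha (p m) m 3) * \<tau> m) ^ 3 / 3 = c m"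
        by (simp add: c_def power_mult_distrib)
    qed
    ultimately have "(\<lambda>m. c m) \<longlonglongrightarrow> 0 ^ 3 / 3" by (rule Lim_transform_eventually)
    then show ?thesis by simp
  qed
  have u0: "(\<lambda>m. 2 * sqrt (2 / pi) / u m) \<longlonglongrightarrow> 0"
    by (rule tendsto_divide_0[OF tendsto_const]) (rule filterlim_at_top_imp_at_infinity, use B in \<open>simp add: u_def\<close>)
  have U1: "U \<longlonglongrightarrow> 1"
  proof -
    have "U \<longlonglongrightarrow> exp 0 * (1 + 0)" unfolding U_def by (intro tendsto_intros c0 u0)
    then show ?thesis by simp
  qed
  have "(\<lambda>m. E m / G m) \<longlonglongrightarrow> 1"
  proof (rule tendsto_sandwich[OF _ _ tendsto_const U1])
    show "eventually (\<lambda>m. 1 \<le> E m / G m) sequentially"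
      by (rule eventually_sequentiallyI[of 1]) (use facts in auto)
    show "eventually (\<lambda>m. E m / G m \<le> U m) sequentially"
      by (rule eventually_sequentiallyI[of 1]) (use facts in auto)
  qed
  then show "((\<lambda>m. expected_B (p m) m / sqrt (pi / (2 * alpha (p m) m 2))) \<longlongrightarrow> 1) sequentially"
    by (simp add: E_def G_def)
qed


end
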